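(* For every $p\in(0,1/2]$ and $\delta,\nu\in(0,1]$ there are $K=K(p,\delta,\nu)>0$ and $L_1=L_1(p,\delta,\nu)\geq1$ with the following property. Let $n\geq2$, $L\geq L_1$, and $x\in\mathrm{Incomp}_n(\delta,\nu)$. Then $\mathcal T_p(x,L)\leq K/\sqrt n$.
   Context: For $\delta,\nu\in(0,1]$, $\mathrm{Comp}_n(\delta,\nu)$ is the set of unit vectors $x\in\mathbb{R}^n$ for which there exists $y\in\mathbb{R}^n$ with at most $\delta n$ nonzero coordinates and $\|x-y\|_2\leq\nu$, and $\mathrm{Incomp}_n(\delta,\nu)=S^{n-1}\setminus\mathrm{Comp}_n(\delta,\nu)$. The Lévy concentration function is $\mathcal L(\xi,t)=\sup_{\lambda\in\mathbb{R}}\mathbb{P}\{|\xi-\lambda|\leq t\}$. For $p\in(0,1/2]$, $x\in S^{n-1}$ and $L>0$, the threshold $\mathcal T_p(x,L)$ is the supremum of all $t\in(0,1]$ such that $\mathcal L(\sum_{i=1}^n b_ix_i,t)>Lt$, where $b_1,\dots,b_n$ are independent Bernoulli($p$) random variables (taking value $1$ with probability $p$ and $0$ otherwise). *)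

theory Defs
  imports "HOL-Probability.Probability"
begin

text \<open>Vectors in R^n are represented as functions nat => real supported on {..<n}.\<close>

definition unit_sphere :: "nat \<Rightarrow> (nat \<Rightarrow> real) set" where
  "unit_sphere n = {x. (\<forall>i\<ge>n. x i = 0) \<and> (\<Sum>i<n. (x i)\<^sup>2) = 1}"

definition Comp :: "nat \<Rightarrow> real \<Rightarrow> real \<Rightarrow> (nat \<Rightarrow> real) set" where
  "Comp n \<delta> \<nu> = {x \<in> unit_sphere n. \<exists>y::nat \<Rightarrow> real. (\<forall>i\<ge>n. y i = 0) \<and>
       real (card {i\<in>{..<n}. y i \<noteq> 0}) \<le> \<delta> * real n \<and>
       sqrt (\<Sum>i<n. (x i - y i)\<^sup>2) \<le> \<nu>}"

definition Incomp :: "nat \<Rightarrow> real \<Rightarrow> real \<Rightarrow> (nat \<Rightarrow> real) set" where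
  "Incomp n \<delta> \<nu> = unit_sphere n - Comp n \<delta> \<nu>"

definition levy_conc :: "real pmf \<Rightarrow> real \<Rightarrow> real" where
  "levy_conc M t = (SUP c::real. measure_pmf.prob M {y. \<bar>y - c\<bar> \<le> t})"

definition bern_sum :: "real \<Rightarrow> nat \<Rightarrow> (nat \<Rightarrow> real) \<Rightarrow> real pmf" where
  "bern_sum p n x = map_pmf (\<lambda>b. \<Sum>i<n. (if b i then 1 else 0) * x i)
      (Pi_pmf {..<n} False (\<lambda>_. bernoulli_pmf p))"

definition threshold :: "real \<Rightarrow> nat \<Rightarrow> (nat \<Rightarrow> real) \<Rightarrow> real \<Rightarrow> real" where
  "threshold p n x L = Sup {t. 0 < t \<and> t \<le> 1 \<and> levy_conc (bern_sum p n x) t > L * t}"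

end

theory Submission
  imports Defs
begin



lemma sum_pow_pick:
  assumes "finite S"
  shows "(\<Sum>A\<in>Pow S. \<Sum>a\<in>A. f a A) = (\<Sum>a\<in>S. \<Sum>B\<in>Pow (S-{a}). f a (insert a B))"
proof -
  have fin: "finite (Pow S)" using assms by simp
  have fin2: "\<And>A. A \<in> Pow S \<Longrightarrow> finite A" using assms finite_subset by auto
  have "(\<Sum>A\<in>Pow S. \<Sum>a\<in>A. f a A) = (\<Sum>(A,a)\<in>Sigma (Pow S) (\<lambda>A. A). f a A)"
    using sum.Sigma[of "Pow S" "\<lambda>A. A" "\<lambda>A a. f a A"] fin fin2 by auto
  also have "\<dots> = (\<Sum>(a,B)\<in>Sigma S (\<lambda>a. Pow (S-{a})). f a (insert a B))"
    by (rule sum.reindex_bij_witness[where i="\<lambda>(a,B). (insert a B, a)" and j="\<lambda>(A,a). (a, A-{a})"]) (auto simp: insert_absorb)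
  also have "\<dots> = (\<Sum>a\<in>S. \<Sum>B\<in>Pow (S-{a}). f a (insert a B))"
    using assms by (intro sum.Sigma[symmetric]) auto
  finally show ?thesis .
qed

definition Nf :: "real \<Rightarrow> real \<Rightarrow> real \<Rightarrow> real" where
  "Nf r t u = (if u > t then 0 else (t - max u (-t)) / r + 1)"

lemma Nf_step:
  assumes "r > 0" "t \<ge> 0" "y \<ge> r"
  shows "Nf r t (u + y) + (if \<bar>u\<bar> \<le> t then 1 else 0) \<le> Nf r t u"
proof -
  have A: "Nf r t v \<le> 2*t/r + 1" for v
  proof -
    have "(t - max v (-t)) / r \<le> (2*t)/r" using assms by (intro divide_right_mono) auto
    then show ?thesis unfolding Nf_def using assms by auto
  qed
  consider "u > t" | "\<bar>u\<bar> \<le> t" | "u < -t" by linarith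
  then show ?thesis
  proof cases
    case 1 then show ?thesis unfolding Nf_def using assms by auto
  next
    case 2
    show ?thesis
    proof (cases "u + y > t")
      case True
      have "0 \<le> (t - u)/r" using 2 assms by simp
      then show ?thesis unfolding Nf_def using True 2 by auto
    next
      case False
      have "(t - (u+y))/r \<le> (t-u)/r - 1"
      proof -
        have "(t - (u+y))/r \<le> (t - u - r)/r" using assms by (intro divide_right_mono) auto
        also have "\<dots> = (t-u)/r - 1" using assms by (simp add: field_simps)
        finally show ?thesis .
      qed
      moreover have "max (u+y) (-t) = u + y" "max u (-t) = u" using 2 assms by auto
      ultimately show ?thesis unfolding Nf_def using False 2 by auto
    qed
  next
    case 3
    then have "Nf r t u = 2*t/r + 1" unfolding Nf_def using assms by (auto simp: field_simps)
    then show ?thesis using A[of "u+y"] 3 by auto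
  qed
qed

lemma Nf_nonneg: "r > 0 \<Longrightarrow> t \<ge> 0 \<Longrightarrow> Nf r t u \<ge> 0"
  unfolding Nf_def by (auto simp: field_simps)

definition Phi :: "(nat \<Rightarrow> real) \<Rightarrow> real \<Rightarrow> nat set \<Rightarrow> real \<Rightarrow> real" where
  "Phi x t S u = (\<Sum>A\<in>Pow S. if \<bar>u + sum x A\<bar> \<le> t then fact (card A) * fact (card S - card A) else 0)"

lemma chain_bound:
  assumes "r > 0" "t \<ge> 0" "finite S" "\<forall>i\<in>S. x i \<ge> r"
  shows "Phi x t S u \<le> fact (card S) * Nf r t u"
  using assms(3,4)
proof (induction "card S" arbitrary: S u rule: less_induct)
  case less
  show ?case
  proof (cases "S = {}")
    case True
    have "Phi x t S u = (if \<bar>u\<bar> \<le> t then 1 else 0)" unfolding Phi_def True by simp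
    moreover have "Nf r t (u + r) + (if \<bar>u\<bar> \<le> t then 1 else 0) \<le> Nf r t u"
      by (rule Nf_step[OF assms(1,2) order.refl])
    moreover have "Nf r t (u+r) \<ge> 0" by (rule Nf_nonneg[OF assms(1,2)])
    ultimately show ?thesis using True by simp
  next
    case False
    define m where "m = card S"
    have m1: "m \<ge> 1" using False less.prems unfolding m_def by (simp add: Suc_le_eq card_gt_0_iff)
    define g where "g A = (if \<bar>u + sum x A\<bar> \<le> t then 1 else (0::real))" for A
    have split: "fact (card A) * fact (m - card A) = (if \<bar>u + sum x A\<bar> \<le> t then 1 else 0) * 0 + (\<Sum>a\<in>A. fact (card (A - {a})) * fact ((m - 1) - card (A - {a})) :: real)"
      if "A \<in> Pow S" "A \<noteq> {}" for A
    proof -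
      have fA: "finite A" using that less.prems finite_subset by auto
      have cA: "card A \<ge> 1" "card A \<le> m" using that fA less.prems unfolding m_def
        by (auto simp: Suc_le_eq card_gt_0_iff card_mono)
      have "(\<Sum>a\<in>A. fact (card (A - {a})) * fact ((m - 1) - card (A - {a})) :: real)
          = (\<Sum>a\<in>A. fact (card A - 1) * fact (m - card A))"
        using fA cA by (intro sum.cong refl) (simp add: card_Diff_singleton)
      also have "\<dots> = real (card A) * (fact (card A - 1) * fact (m - card A))" by simp
      also have "\<dots> = fact (card A) * fact (m - card A)"
      proof -
        have "fact (card A) = real (card A) * fact (card A - 1)" by (rule fact_reduce) (use cA in simp)
        then show ?thesis by (simp only: mult.assoc)
      qed
      finally show ?thesis by simp
    qed
    have "Phi x t S u = (\<Sum>A\<in>Pow S. g A * (fact (card A) * fact (m - card A)))"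
      unfolding Phi_def g_def m_def by (intro sum.cong refl) auto
    also have "\<dots> = g {} * fact m + (\<Sum>A\<in>Pow S - {{}}. g A * (fact (card A) * fact (m - card A)))"
      using less.prems by (subst sum.remove[of _ "{}"]) auto
    also have "(\<Sum>A\<in>Pow S - {{}}. g A * (fact (card A) * fact (m - card A)))
        = (\<Sum>A\<in>Pow S. \<Sum>a\<in>A. g A * (fact (card (A - {a})) * fact ((m - 1) - card (A - {a}))))"
    proof -
      have "(\<Sum>A\<in>Pow S - {{}}. g A * (fact (card A) * fact (m - card A)))
          = (\<Sum>A\<in>Pow S - {{}}. \<Sum>a\<in>A. g A * (fact (card (A - {a})) * fact ((m - 1) - card (A - {a}))))"
        by (intro sum.cong refl) (simp add: split sum_distrib_left)
      also have "\<dots> = (\<Sum>A\<in>Pow S. \<Sum>a\<in>A. g A * (fact (card (A - {a})) * fact ((m - 1) - card (A - {a}))))"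
        using less.prems by (intro sum.mono_neutral_left) auto
      finally show ?thesis .
    qed
    also have "\<dots> = (\<Sum>a\<in>S. \<Sum>B\<in>Pow (S-{a}). g (insert a B) * (fact (card (insert a B - {a})) * fact ((m - 1) - card (insert a B - {a}))))"
      by (rule sum_pow_pick) (rule less.prems(1))
    also have "\<dots> = (\<Sum>a\<in>S. Phi x t (S - {a}) (u + x a))"
    proof (intro sum.cong refl)
      fix a assume a: "a \<in> S"
      have cS: "card (S - {a}) = m - 1" using a less.prems unfolding m_def by simp
      show "(\<Sum>B\<in>Pow (S-{a}). g (insert a B) * (fact (card (insert a B - {a})) * fact ((m - 1) - card (insert a B - {a}))))
          = Phi x t (S - {a}) (u + x a)"
        unfolding Phi_def cS
      proof (intro sum.cong refl)
        fix B assume B: "B \<in> Pow (S - {a})"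
        then have aB: "a \<notin> B" by auto
        have fB: "finite B" using B by (intro rev_finite_subset[OF less.prems(1)]) auto
        have "insert a B - {a} = B" using aB by auto
        moreover have "sum x (insert a B) = x a + sum x B" using aB fB by simp
        ultimately show "g (insert a B) * (fact (card (insert a B - {a})) * fact ((m - 1) - card (insert a B - {a})))
          = (if \<bar>u + x a + sum x B\<bar> \<le> t then fact (card B) * fact (m - 1 - card B) else 0)"
          unfolding g_def by (simp add: ac_simps)
      qed
    qed
    also have "\<dots> \<le> (\<Sum>a\<in>S. fact (m - 1) * Nf r t (u + x a))"
    proof (intro sum_mono)
      fix a assume a: "a \<in> S"
      have "card (S - {a}) < card S" by (rule card_Diff1_less[OF less.prems(1) a])
      moreover have "card (S - {a}) = m - 1" using a less.prems unfolding m_def by simp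
      ultimately show "Phi x t (S - {a}) (u + x a) \<le> fact (m - 1) * Nf r t (u + x a)"
        using less.hyps[of "S - {a}" "u + x a"] less.prems by auto
    qed
    also have "\<dots> \<le> (\<Sum>a\<in>S. fact (m - 1) * (Nf r t u - g {}))"
    proof (intro sum_mono mult_left_mono)
      fix a assume a: "a \<in> S"
      show "Nf r t (u + x a) \<le> Nf r t u - g {}"
        using Nf_step[OF assms(1,2), of "x a" u] a less.prems unfolding g_def by auto
    qed simp
    also have "\<dots> = real m * fact (m - 1) * (Nf r t u - g {})" unfolding m_def by simp
    also have "real m * fact (m - 1) = (fact m :: real)"
      by (rule fact_reduce[symmetric]) (use m1 in simp)
    finally have "Phi x t S u \<le> g {} * fact m + fact m * (Nf r t u - g {})" by simp
    then show ?thesis unfolding m_def by (simp add: algebra_simps)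
  qed
qed



lemma central_fact: "real ((2*m) choose m) = fact (2*m) / (fact m * fact m)"
    using binomial_fact[of m "2*m"] by (simp add: mult_2)

lemma central_rec: "real ((2*Suc n) choose Suc n) = real ((2*n) choose n) * ((2*real n+2)*(2*real n+1)) / ((real n+1)*(real n+1))"
proof -
  have f1: "(fact (2*Suc n) :: real) = (2*real n+2)*(2*real n+1) * fact (2*n)"
  proof -
    have "2*Suc n = Suc (Suc (2*n))" by simp
    then have "(fact (2*Suc n) :: real) = fact (Suc (Suc (2*n)))" by (simp only:)
    also have "\<dots> = (2*real n+2)*(2*real n+1) * fact (2*n)" by (simp only: fact_Suc of_nat_Suc) (simp add: algebra_simps)
    finally show ?thesis .
  qed
  have f2: "(fact (Suc n) :: real) = (real n+1) * fact n" by (simp add: algebra_simps)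
  have "real ((2*Suc n) choose Suc n) = fact (2*Suc n) / (fact (Suc n) * fact (Suc n))"
    by (rule central_fact)
  also have "\<dots> = (2*real n+2)*(2*real n+1) * fact (2*n) / (((real n+1) * fact n) * ((real n+1) * fact n))"
    unfolding f1 f2 ..
  also have "\<dots> = (fact (2*n) / (fact n * fact n)) * ((2*real n+2)*(2*real n+1)) / ((real n+1)*(real n+1))"
    by (simp add: field_simps)
  also have "\<dots> = real ((2*n) choose n) * ((2*real n+2)*(2*real n+1)) / ((real n+1)*(real n+1))"
    by (simp only: central_fact)
  finally show ?thesis .
qed

lemma cancel_aux: "(a::real) \<noteq> 0 \<Longrightarrow> x * a / (a*a) = x / a" by simp

lemma central_bound: "(real ((2*n) choose n) / 4^n)^2 * (3*real n+1) \<le> 1"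
proof (induction n)
  case 0 then show ?case by simp
next
  case (Suc n)
  define c where "c = real ((2*n) choose n) / 4^n"
  have c0: "c \<ge> 0" unfolding c_def by simp
  have "real ((2*Suc n) choose Suc n) / 4^(Suc n) = c * ((2*real n+2)*(2*real n+1)) / (4*((real n+1)*(real n+1)))"
    using central_rec[of n] unfolding c_def by (simp add: field_simps)
  also have "\<dots> = c * (2*real n+1) / (2*real n+2)"
  proof -
    have 1: "(4::real)*((real n+1)*(real n+1)) = (2*real n+2)*(2*real n+2)" by (simp add: algebra_simps)
    have a: "(2*real n+2) \<noteq> 0" by simp
    have 2: "c * ((2*real n+2)*(2*real n+1)) / ((2*real n+2)*(2*real n+2)) = c*(2*real n+1)/(2*real n+2)"
      using cancel_aux[OF a, of "c*(2*real n+1)"] by (simp only: ac_simps)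
    show ?thesis by (simp only: 1 2)
  qed
  finally have e: "real ((2*Suc n) choose Suc n) / 4^(Suc n) = c * (2*real n+1) / (2*real n+2)" .
  have ih: "c^2 * (3*real n+1) \<le> 1" using Suc.IH unfolding c_def .
  have key: "((2*real n+1)/(2*real n+2))^2 * (3*real (Suc n)+1) \<le> (3*real n+1)"
  proof -
    have "(2*real n+1)^2 * (3*real n+4) \<le> (3*real n+1)*(2*real n+2)^2"
      by (simp add: power2_eq_square algebra_simps)
    moreover have "((2*real n+1)/(2*real n+2))^2 * (3*real (Suc n)+1) = ((2*real n+1)^2 * (3*real n+4)) / (2*real n+2)^2"
      by (simp add: power_divide algebra_simps)
    moreover have "(2*real n+2)^2 > 0" by simp
    ultimately show ?thesis by (simp add: pos_divide_le_eq)
  qed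
  have "(c * (2*real n+1) / (2*real n+2))^2 * (3 * real (Suc n) + 1) = c^2 * (((2*real n+1)/(2*real n+2))^2 * (3*real (Suc n)+1))"
    by (simp add: power_mult_distrib power_divide)
  also have "\<dots> \<le> c^2 * (3*real n+1)" by (rule mult_left_mono[OF key]) simp
  also have "\<dots> \<le> 1" by (rule ih)
  finally show ?case using e by simp
qed

lemma half_binom_bound: "(real (j choose k) / 2^j)^2 * (real j+1) \<le> 2"
proof -
  define n where "n = j div 2"
  have j: "j = 2*n \<or> j = Suc (2*n)" unfolding n_def by arith
  define c where "c = real ((2*n) choose n) / 4^n"
  have cb: "c^2 * (3*real n+1) \<le> 1" unfolding c_def by (rule central_bound)
  have c0: "c \<ge> 0" unfolding c_def by simp
  have h: "real (j choose k) / 2^j \<le> c"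
  proof (cases "j = 2*n")
    case True
    have "j choose k \<le> (2*n) choose n" using True binomial_maximum'[of n k] by simp
    then have "real (j choose k) \<le> real ((2*n) choose n)" by simp
    moreover have "(2::real)^j = 4^n" using True by (simp add: power_mult)
    ultimately show ?thesis unfolding c_def by (simp add: divide_right_mono)
  next
    case False
    then have jj: "j = Suc (2*n)" using j by simp
    have m: "j choose k \<le> j choose n" using binomial_maximum[of j k] unfolding n_def .
    have b: "Suc n * (Suc (2*n) choose Suc n) = Suc (2*n) * ((2*n) choose n)"
      by (rule Suc_times_binomial)
    have cc: "(Suc (2*n) choose Suc n) = (Suc (2*n) choose n)"
      using binomial_symmetric[of "Suc n" "Suc (2*n)"] by simp
    have e: "real (Suc n) * real (Suc (2*n) choose n) = real (Suc (2*n)) * real ((2*n) choose n)"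
      using b unfolding cc of_nat_mult[symmetric] by (simp only:)
    have "real (Suc (2*n)) * real ((2*n) choose n) \<le> (2 * real (Suc n)) * real ((2*n) choose n)"
      by (intro mult_right_mono) auto
    then have "real (Suc n) * real (Suc (2*n) choose n) \<le> real (Suc n) * (2 * real ((2*n) choose n))"
      unfolding e by (simp only: ac_simps)
    then have "real (Suc (2*n) choose n) \<le> 2 * real ((2*n) choose n)"
      by (simp only: mult_le_cancel_left_pos of_nat_0_less_iff zero_less_Suc)
    moreover have "real (j choose k) \<le> real (Suc (2*n) choose n)" using m jj by simp
    ultimately have x: "real (j choose k) / 2 \<le> real ((2*n) choose n)" by linarith
    have "(2::real)^j = 2 * 4^n" using jj by (simp add: power_mult)
    then have "real (j choose k) / 2^j = (real (j choose k) / 2) / 4^n" by simp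
    also have "\<dots> \<le> c" unfolding c_def by (rule divide_right_mono[OF x]) simp
    finally show ?thesis .
  qed
  have "(real (j choose k) / 2^j)^2 \<le> c^2"
    by (rule power_mono[OF h]) simp
  moreover have "real j + 1 \<le> 2*(3*real n+1)" using j by (elim disjE) simp_all
  ultimately have "(real (j choose k) / 2^j)^2 * (real j+1) \<le> c^2 * (2*(3*real n+1))"
    by (intro mult_mono) simp_all
  also have "\<dots> = 2*(c^2*(3*real n+1))" by (simp add: algebra_simps)
  also have "\<dots> \<le> 2" using cb by simp
  finally show ?thesis .
qed



definition bpmf :: "nat \<Rightarrow> real \<Rightarrow> nat \<Rightarrow> real" where
  "bpmf m q k = real (m choose k) * q^k * (1-q)^(m-k)"

lemma bpmf_nonneg: "0 \<le> q \<Longrightarrow> q \<le> 1 \<Longrightarrow> bpmf m q k \<ge> 0"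
  unfolding bpmf_def by simp

lemma bpmf_sum: "(\<Sum>k\<le>m. bpmf m q k) = 1"
  using binomial_ring[of q "1-q" m] unfolding bpmf_def by simp

lemma thin: "bpmf m p k = (\<Sum>j\<le>m. bpmf m (2*p) j * (real (j choose k) / 2^j))"
proof (cases "k \<le> m")
  case False
  then have "\<forall>j\<in>{..m}. bpmf m (2*p) j * (real (j choose k) / 2^j) = 0" by simp
  then have "(\<Sum>j\<le>m. bpmf m (2*p) j * (real (j choose k) / 2^j)) = 0" by (rule sum.neutral)
  moreover have "bpmf m p k = 0" using False unfolding bpmf_def by simp
  ultimately show ?thesis by simp
next
  case True
  have z: "(\<Sum>j\<le>m. bpmf m (2*p) j * (real (j choose k) / 2^j))
        = (\<Sum>j\<in>{k..m}. bpmf m (2*p) j * (real (j choose k) / 2^j))"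
  proof (rule sum.mono_neutral_right)
    show "\<forall>i\<in>{..m} - {k..m}. bpmf m (2 * p) i * (real (i choose k) / 2 ^ i) = 0" by auto
  qed auto
  have t: "bpmf m (2*p) j * (real (j choose k) / 2^j)
        = real (m choose k) * (real ((m-k) choose (j-k)) * p^j * (1-2*p)^(m-j))"
    if "j \<in> {k..m}" for j
  proof -
    have cm: "real (m choose j) * real (j choose k) = real (m choose k) * real ((m-k) choose (j-k))"
      using choose_mult[of k j m] that unfolding of_nat_mult[symmetric] by simp
    have "(2*p)^j / 2^j = p^j" by (simp add: power_mult_distrib)
    then have "bpmf m (2*p) j * (real (j choose k) / 2^j)
        = (real (m choose j) * real (j choose k)) * ((2*p)^j / 2^j) * (1-2*p)^(m-j)"
      unfolding bpmf_def by (simp add: ac_simps)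
    also have "\<dots> = real (m choose k) * (real ((m-k) choose (j-k)) * p^j * (1-2*p)^(m-j))"
      unfolding cm \<open>(2*p)^j / 2^j = p^j\<close> by (simp add: ac_simps)
    finally show ?thesis .
  qed
  have "(\<Sum>j\<in>{k..m}. bpmf m (2*p) j * (real (j choose k) / 2^j))
      = real (m choose k) * (\<Sum>j\<in>{k..m}. real ((m-k) choose (j-k)) * p^j * (1-2*p)^(m-j))"
    by (subst sum_distrib_left) (rule sum.cong[OF refl t])
  also have "(\<Sum>j\<in>{k..m}. real ((m-k) choose (j-k)) * p^j * (1-2*p)^(m-j))
      = (\<Sum>i\<in>{0..m-k}. real ((m-k) choose i) * p^(i+k) * (1-2*p)^((m-k)-i))"
  proof -
    have "{k..m} = {0+k..(m-k)+k}" using True by simp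
    then have "(\<Sum>j\<in>{k..m}. real ((m-k) choose (j-k)) * p^j * (1-2*p)^(m-j))
       = (\<Sum>i\<in>{0..m-k}. real ((m-k) choose (i+k-k)) * p^(i+k) * (1-2*p)^(m-(i+k)))"
      by (simp only: sum.shift_bounds_cl_nat_ivl)
    also have "\<dots> = (\<Sum>i\<in>{0..m-k}. real ((m-k) choose i) * p^(i+k) * (1-2*p)^((m-k)-i))"
      by (intro sum.cong refl) (simp add: diff_diff_left add.commute)
    finally show ?thesis .
  qed
  also have "\<dots> = p^k * (\<Sum>i\<le>m-k. real ((m-k) choose i) * p^i * (1-2*p)^((m-k)-i))"
    by (simp add: sum_distrib_left power_add atLeast0AtMost ac_simps)
  also have "(\<Sum>i\<le>m-k. real ((m-k) choose i) * p^i * (1-2*p)^((m-k)-i)) = (p + (1-2*p))^(m-k)"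
    by (rule binomial_ring[symmetric])
  also have "p + (1-2*p) = 1 - p" by simp
  finally show ?thesis using z unfolding bpmf_def by (simp add: ac_simps)
qed

lemma inv_moment: assumes "0 < q" "q \<le> 1"
  shows "(\<Sum>j\<le>m. bpmf m q j / (real j + 1)) \<le> 1 / ((real m + 1) * q)"
proof -
  have t: "bpmf m q j / (real j + 1) = bpmf (Suc m) q (Suc j) / ((real m + 1) * q)" if "j \<le> m" for j
  proof -
    have s: "real (Suc j) * real (Suc m choose Suc j) = real (Suc m) * real (m choose j)"
      using Suc_times_binomial[of j m] unfolding of_nat_mult[symmetric] by (simp only:)
    have s': "real (Suc m choose Suc j) / (real m + 1) = real (m choose j) / (real j + 1)"
      using s by (simp del: binomial_Suc_Suc add: field_simps)
    have "bpmf (Suc m) q (Suc j) = ((real m + 1) * q) * ((real (Suc m choose Suc j) / (real m + 1)) * (q^j * (1-q)^(m-j)))"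
      unfolding bpmf_def by (simp del: binomial_Suc_Suc add: ac_simps)
    moreover have "(real m + 1) * q \<noteq> 0" using assms by simp
    ultimately have "bpmf (Suc m) q (Suc j) / ((real m + 1) * q) = (real (Suc m choose Suc j) / (real m + 1)) * (q^j * (1-q)^(m-j))"
      by (metis nonzero_mult_div_cancel_left)
    also have "\<dots> = bpmf m q j / (real j + 1)" unfolding s' bpmf_def by simp
    finally show ?thesis by simp
  qed
  have "(\<Sum>j\<le>m. bpmf m q j / (real j + 1)) = (\<Sum>j\<le>m. bpmf (Suc m) q (Suc j)) / ((real m + 1) * q)"
    by (simp add: t sum_divide_distrib)
  also have "(\<Sum>j\<le>m. bpmf (Suc m) q (Suc j)) \<le> (\<Sum>j\<le>Suc m. bpmf (Suc m) q j)"
    unfolding sum.atMost_Suc_shift using bpmf_nonneg[OF less_imp_le[OF assms(1)] assms(2)] by simp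
  also have "\<dots> = 1" by (rule bpmf_sum)
  finally show ?thesis using assms by (simp add: divide_right_mono)
qed

lemma weighted_CS: assumes "\<And>i. i \<in> I \<Longrightarrow> w i \<ge> (0::real)"
  shows "(\<Sum>i\<in>I. w i * h i)^2 \<le> (\<Sum>i\<in>I. w i) * (\<Sum>i\<in>I. w i * (h i)^2)"
proof -
  have "(\<Sum>i\<in>I. sqrt (w i) * (sqrt (w i) * h i))^2 \<le> (\<Sum>i\<in>I. (sqrt (w i))^2) * (\<Sum>i\<in>I. (sqrt (w i) * h i)^2)"
    by (rule Cauchy_Schwarz_ineq_sum)
  moreover have "(\<Sum>i\<in>I. sqrt (w i) * (sqrt (w i) * h i)) = (\<Sum>i\<in>I. w i * h i)"
    using assms by (intro sum.cong refl) (simp add: mult.assoc[symmetric])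
  moreover have "(\<Sum>i\<in>I. (sqrt (w i))^2) = (\<Sum>i\<in>I. w i)"
    using assms by (intro sum.cong refl) simp
  moreover have "(\<Sum>i\<in>I. (sqrt (w i) * h i)^2) = (\<Sum>i\<in>I. w i * (h i)^2)"
    using assms by (intro sum.cong refl) (simp add: power_mult_distrib)
  ultimately show ?thesis by simp
qed

lemma bpmf_max: assumes "0 < p" "p \<le> 1/2"
  shows "(bpmf m p k)^2 \<le> 1 / ((real m + 1) * p)"
proof -
  define w where "w j = bpmf m (2*p) j" for j
  define h where "h j = real (j choose k) / 2^j" for j
  have w0: "\<And>j. w j \<ge> 0" unfolding w_def using assms by (intro bpmf_nonneg) auto
  have "(bpmf m p k)^2 = (\<Sum>j\<le>m. w j * h j)^2" unfolding w_def h_def thin[of m p k] ..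
  also have "\<dots> \<le> (\<Sum>j\<le>m. w j) * (\<Sum>j\<le>m. w j * (h j)^2)" using w0 by (intro weighted_CS)
  also have "(\<Sum>j\<le>m. w j) = 1" unfolding w_def by (rule bpmf_sum)
  also have "(\<Sum>j\<le>m. w j * (h j)^2) \<le> (\<Sum>j\<le>m. w j * (2 / (real j + 1)))"
  proof (intro sum_mono mult_left_mono w0)
    fix j
    have "(h j)^2 * (real j + 1) \<le> 2" unfolding h_def by (rule half_binom_bound)
    then show "(h j)^2 \<le> 2 / (real j + 1)" by (simp add: field_simps)
  qed
  also have "\<dots> = 2 * (\<Sum>j\<le>m. w j / (real j + 1))" by (subst sum_distrib_left) (intro sum.cong refl; simp)
  also have "(\<Sum>j\<le>m. w j / (real j + 1)) \<le> 1 / ((real m + 1) * (2*p))"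
    unfolding w_def using assms by (intro inv_moment) auto
  finally have X: "(bpmf m p k)^2 \<le> 1 * (2 * (1 / ((real m + 1) * (2 * p))))" by auto
  have eq: "1 * (2 * (1 / ((real m + 1) * (2 * p)))) = 1 / ((real m + 1) * p)" by simp
  show ?thesis using X unfolding eq .
qed


definition Qf :: "real \<Rightarrow> (nat \<Rightarrow> real) \<Rightarrow> real \<Rightarrow> nat set \<Rightarrow> real \<Rightarrow> real" where
  "Qf p x t S u = (\<Sum>A\<in>Pow S. if \<bar>u + sum x A\<bar> \<le> t then p^card A * (1-p)^(card S - card A) else 0)"

lemma LO_pos:
  assumes "r > 0" "t \<ge> 0" "finite S" "\<forall>i\<in>S. x i \<ge> r" "0 \<le> p" "p \<le> 1"
    and Fb: "\<And>k. k \<le> card S \<Longrightarrow> bpmf (card S) p k \<le> Fb"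
  shows "Qf p x t S u \<le> Fb * Nf r t u"
proof -
  define m where "m = card S"
  have eq: "p^card A * (1-p)^(m - card A) = bpmf m p (card A) * (fact (card A) * fact (m - card A) / fact m)"
    if "A \<in> Pow S" for A
  proof -
    have k: "card A \<le> m" unfolding m_def using that assms(3) by (simp add: card_mono)
    have e: "real (m choose card A) * (fact (card A) * fact (m - card A)) = fact m"
      using binomial_fact[OF k] by (simp add: eq_divide_eq)
    have one: "real (m choose card A) * (fact (card A) * fact (m - card A) / fact m) = 1"
      by (simp only: times_divide_eq_right e) simp
    have "bpmf m p (card A) * (fact (card A) * fact (m - card A) / fact m)
        = (real (m choose card A) * (fact (card A) * fact (m - card A) / fact m)) * (p^card A * (1-p)^(m - card A))"
      unfolding bpmf_def by (simp only: ac_simps)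
    then show ?thesis unfolding one by simp
  qed
  have "Qf p x t S u = (\<Sum>A\<in>Pow S. bpmf m p (card A) * ((if \<bar>u + sum x A\<bar> \<le> t then fact (card A) * fact (m - card A) else 0) / fact m))"
    unfolding Qf_def m_def[symmetric] by (intro sum.cong refl) (simp add: eq)
  also have "\<dots> \<le> (\<Sum>A\<in>Pow S. Fb * ((if \<bar>u + sum x A\<bar> \<le> t then fact (card A) * fact (m - card A) else 0) / fact m))"
  proof (intro sum_mono mult_right_mono)
    fix A assume "A \<in> Pow S"
    then have "card A \<le> card S" using assms(3) by (simp add: card_mono)
    then show "bpmf m p (card A) \<le> Fb" unfolding m_def by (rule Fb)
  qed simp
  also have "\<dots> = Fb * (Phi x t S u / fact m)"
    unfolding Phi_def m_def by (simp add: sum_distrib_left sum_divide_distrib)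
  also have "\<dots> \<le> Fb * Nf r t u"
  proof (rule mult_left_mono)
    have "Phi x t S u \<le> fact m * Nf r t u" unfolding m_def by (rule chain_bound[OF assms(1-4)])
    then show "Phi x t S u / fact m \<le> Nf r t u" by (simp add: divide_le_eq mult.commute)
    have "bpmf m p 0 \<le> Fb" using Fb[of 0] unfolding m_def by simp
    moreover have "bpmf m p 0 \<ge> 0" using assms by (intro bpmf_nonneg)
    ultimately show "0 \<le> Fb" by linarith
  qed
  finally show ?thesis .
qed

lemma Qf_neg: "Qf p x t S u = Qf p (\<lambda>i. - x i) t S (-u)"
  unfolding Qf_def
proof (intro sum.cong refl)
  fix A
  have "\<bar>u + sum x A\<bar> = \<bar>-u + sum (\<lambda>i. - x i) A\<bar>" by (simp add: sum_negf abs_minus_commute)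
  then show "(if \<bar>u + sum x A\<bar> \<le> t then p ^ card A * (1 - p) ^ (card S - card A) else 0) =
         (if \<bar>- u + sum (\<lambda>i. - x i) A\<bar> \<le> t then p ^ card A * (1 - p) ^ (card S - card A) else 0)" by simp
qed




definition Wt :: "real \<Rightarrow> nat set \<Rightarrow> nat set \<Rightarrow> real" where
  "Wt p U A = p^card A * (1-p)^(card U - card A)"

lemma bern_sum_prob:
  assumes "0 \<le> p" "p \<le> 1"
  shows "measure_pmf.prob (bern_sum p n x) E = (\<Sum>A\<in>Pow {..<n}. if sum x A \<in> E then Wt p {..<n} A else 0)"
proof -
  define U where "U = {..<n::nat}"
  define M where "M = Pi_pmf U False (\<lambda>_. bernoulli_pmf p)"
  define f where "f b = (\<Sum>i<n. (if b i then 1 else 0) * x i)" for b :: "nat \<Rightarrow> bool"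
  define emb where "emb A = (\<lambda>i. i \<in> A)" for A :: "nat set"
  define D where "D = emb ` Pow U"
  have finU: "finite U" unfolding U_def by simp
  have finD: "finite D" unfolding D_def using finU by simp
  have injemb: "inj_on emb (Pow U)" unfolding emb_def inj_on_def by (auto simp: fun_eq_iff)
  have supp: "set_pmf M \<subseteq> D"
  proof
    fix b assume "b \<in> set_pmf M"
    then have "\<forall>i. i \<notin> U \<longrightarrow> b i = False" using set_Pi_pmf_subset[OF finU, of False "\<lambda>_. bernoulli_pmf p"] unfolding M_def by blast
    then have "b = emb {i\<in>U. b i}" unfolding emb_def by (auto simp: fun_eq_iff)
    then show "b \<in> D" unfolding D_def by auto
  qed
  have "measure_pmf.prob (bern_sum p n x) E = measure_pmf.prob M (f -` E)"
    unfolding bern_sum_def M_def f_def U_def by simp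
  also have "\<dots> = measure_pmf.prob M (f -` E \<inter> D)"
  proof -
    have "f -` E \<inter> D \<inter> set_pmf M = f -` E \<inter> set_pmf M" using supp by auto
    have "measure_pmf.prob M (f -` E \<inter> D) = measure_pmf.prob M ((f -` E \<inter> D) \<inter> set_pmf M)"
      by (rule measure_Int_set_pmf[symmetric])
    also have "\<dots> = measure_pmf.prob M (f -` E \<inter> set_pmf M)" unfolding \<open>f -` E \<inter> D \<inter> set_pmf M = f -` E \<inter> set_pmf M\<close> ..
    also have "\<dots> = measure_pmf.prob M (f -` E)" by (rule measure_Int_set_pmf)
    finally show ?thesis by simp
  qed
  also have "\<dots> = sum (pmf M) (f -` E \<inter> D)"
    using finD by (intro measure_measure_pmf_finite) auto
  also have "f -` E \<inter> D = emb ` {A\<in>Pow U. sum x A \<in> E}"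
  proof -
    have fe: "f (emb A) = sum x A" if "A \<in> Pow U" for A
    proof -
      have "f (emb A) = (\<Sum>i\<in>U. if i \<in> A then x i else 0)"
        unfolding f_def emb_def U_def by (intro sum.cong refl) simp
      also have "\<dots> = sum x A" using that finU by (simp add: sum.If_cases Int_absorb1)
      finally show ?thesis .
    qed
    show ?thesis unfolding D_def using fe by auto
  qed
  also have "sum (pmf M) (emb ` {A\<in>Pow U. sum x A \<in> E}) = (\<Sum>A\<in>{A\<in>Pow U. sum x A \<in> E}. pmf M (emb A))"
    using injemb by (intro sum.reindex[unfolded comp_def]) (auto intro: inj_on_subset)
  also have "\<dots> = (\<Sum>A\<in>{A\<in>Pow U. sum x A \<in> E}. Wt p U A)"
  proof (intro sum.cong refl)
    fix A assume "A \<in> {A\<in>Pow U. sum x A \<in> E}"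
    then have AU: "A \<subseteq> U" by auto
    have fA: "finite A" by (rule rev_finite_subset[OF finU AU])
    have "pmf M (emb A) = (\<Prod>i\<in>U. pmf (bernoulli_pmf p) (i \<in> A))"
      unfolding M_def emb_def using finU AU by (subst pmf_Pi) auto
    also have "\<dots> = (\<Prod>i\<in>U. if i \<in> A then p else 1 - p)"
      using assms by (intro prod.cong refl) auto
    also have "\<dots> = (\<Prod>i\<in>A. p) * (\<Prod>i\<in>U-A. 1 - p)"
      using finU AU by (simp add: prod.If_cases Int_absorb1 Diff_eq)
    also have "\<dots> = Wt p U A"
      unfolding Wt_def using fA finU AU by (simp add: card_Diff_subset)
    finally show "pmf M (emb A) = Wt p U A" .
  qed
  also have "\<dots> = (\<Sum>A\<in>Pow U. if sum x A \<in> E then Wt p U A else 0)"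
    using finU by (simp only: sum.inter_filter finite_Pow_iff)
  finally show ?thesis unfolding U_def .
qed


lemma Wt_sum: assumes "finite T" shows "(\<Sum>B\<in>Pow T. Wt p T B) = 1"
proof -
  have "(\<Prod>i\<in>T. p + (1-p)) = (\<Sum>B\<in>Pow T. (\<Prod>i\<in>B. p) * (\<Prod>i\<in>T-B. 1-p))"
    by (rule prod_add[OF assms])
  also have "\<dots> = (\<Sum>B\<in>Pow T. Wt p T B)"
  proof (intro sum.cong refl)
    fix B assume "B \<in> Pow T"
    then have "B \<subseteq> T" "finite B" using assms by (auto intro: rev_finite_subset)
    then show "(\<Prod>i\<in>B. p) * (\<Prod>i\<in>T-B. 1-p) = Wt p T B" unfolding Wt_def using assms
      by (simp add: card_Diff_subset)
  qed
  finally show ?thesis by simp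
qed

lemma Wt_nonneg: "0 \<le> p \<Longrightarrow> p \<le> 1 \<Longrightarrow> Wt p U A \<ge> 0"
  unfolding Wt_def by simp

lemma split_sum:
  assumes U: "finite U" and SU: "S \<subseteq> U"
  shows "(\<Sum>C\<in>Pow U. if sum x C \<in> E then Wt p U C else 0)
       = (\<Sum>B\<in>Pow (U-S). Wt p (U-S) B * (\<Sum>A\<in>Pow S. if sum x A + sum x B \<in> E then Wt p S A else 0))"
proof -
  define T where "T = U - S"
  have fS: "finite S" using U SU by (rule rev_finite_subset)
  have fT: "finite T" unfolding T_def using U by simp
  define g where "g C = (if sum x C \<in> E then Wt p U C else 0)" for C
  have "(\<Sum>C\<in>Pow U. g C) = (\<Sum>(B,A)\<in>Pow T \<times> Pow S. g (A \<union> B))"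
    by (rule sum.reindex_bij_witness[where i="\<lambda>(B,A). A \<union> B" and j="\<lambda>C. (C - S, C \<inter> S)"]) (use SU in \<open>auto simp: T_def Int_Diff_Un\<close>)
  also have "\<dots> = (\<Sum>B\<in>Pow T. \<Sum>A\<in>Pow S. g (A \<union> B))"
    by (rule sum.cartesian_product[symmetric])
  also have "\<dots> = (\<Sum>B\<in>Pow T. Wt p T B * (\<Sum>A\<in>Pow S. if sum x A + sum x B \<in> E then Wt p S A else 0))"
  proof (intro sum.cong refl)
    fix B assume B: "B \<in> Pow T"
    have fB: "finite B" using B fT by (auto intro: rev_finite_subset)
    have "(\<Sum>A\<in>Pow S. g (A \<union> B)) = (\<Sum>A\<in>Pow S. Wt p T B * (if sum x A + sum x B \<in> E then Wt p S A else 0))"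
    proof (intro sum.cong refl)
      fix A assume A: "A \<in> Pow S"
      have fA: "finite A" using A fS by (auto intro: rev_finite_subset)
      have dis: "A \<inter> B = {}" using A B unfolding T_def by auto
      have sx: "sum x (A \<union> B) = sum x A + sum x B" using fA fB dis by (rule sum.union_disjoint)
      have cAB: "card (A \<union> B) = card A + card B" using fA fB dis by (rule card_Un_disjoint)
      have cA: "card A \<le> card S" using A fS by (simp add: card_mono)
      have cB: "card B \<le> card T" using B fT by (simp add: card_mono)
      have cU: "card U = card S + card T" unfolding T_def using U SU by (metis card_Diff_subset fS add_diff_inverse_nat card_mono not_less)
      have "Wt p U (A \<union> B) = Wt p T B * Wt p S A"
      proof -
        have e: "card S + card T - (card A + card B) = (card S - card A) + (card T - card B)" using cA cB by simp
        show ?thesis unfolding Wt_def cAB cU e by (simp add: power_add ac_simps)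
      qed
      then show "g (A \<union> B) = Wt p T B * (if sum x A + sum x B \<in> E then Wt p S A else 0)"
        unfolding g_def sx by simp
    qed
    then show "(\<Sum>A\<in>Pow S. g (A \<union> B)) = Wt p T B * (\<Sum>A\<in>Pow S. if sum x A + sum x B \<in> E then Wt p S A else 0)"
      by (simp add: sum_distrib_left)
  qed
  finally show ?thesis unfolding g_def T_def .
qed



lemma Nf_le: "r > 0 \<Longrightarrow> t \<ge> 0 \<Longrightarrow> Nf r t u \<le> 2*t/r + 1"
proof -
  assume a: "r > 0" "t \<ge> 0"
  have "(t - max u (-t)) / r \<le> (2*t)/r" using a by (intro divide_right_mono) auto
  then show ?thesis unfolding Nf_def using a by auto
qed

lemma spread:
  assumes x: "x \<in> Incomp n \<delta> \<nu>" and n: "n > 0" and nu: "\<nu> > 0"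
  shows "real (card {i\<in>{..<n}. x i \<ge> \<nu>/sqrt n}) + real (card {i\<in>{..<n}. x i \<le> -(\<nu>/sqrt n)}) > \<delta> * n"
proof (rule ccontr)
  define r where "r = \<nu>/sqrt n"
  have r0: "r > 0" unfolding r_def using n nu by simp
  assume "\<not> ?thesis"
  then have le: "real (card {i\<in>{..<n}. x i \<ge> r}) + real (card {i\<in>{..<n}. x i \<le> -r}) \<le> \<delta> * n"
    unfolding r_def by simp
  define G where "G = {i\<in>{..<n}. \<bar>x i\<bar> \<ge> r}"
  have "G = {i\<in>{..<n}. x i \<ge> r} \<union> {i\<in>{..<n}. x i \<le> -r}" unfolding G_def by auto
  moreover have "{i\<in>{..<n}. x i \<ge> r} \<inter> {i\<in>{..<n}. x i \<le> -r} = {}" using r0 by auto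
  ultimately have "card G = card {i\<in>{..<n}. x i \<ge> r} + card {i\<in>{..<n}. x i \<le> -r}"
    by (simp add: card_Un_disjoint)
  with le have cG: "real (card G) \<le> \<delta> * n" by simp
  define y where "y i = (if i < n \<and> \<bar>x i\<bar> \<ge> r then x i else 0)" for i
  have y1: "\<forall>i\<ge>n. y i = 0" unfolding y_def by simp
  have "{i\<in>{..<n}. y i \<noteq> 0} \<subseteq> G" unfolding y_def G_def by auto
  then have "card {i\<in>{..<n}. y i \<noteq> 0} \<le> card G" by (intro card_mono) (auto simp: G_def)
  with cG have y2: "real (card {i\<in>{..<n}. y i \<noteq> 0}) \<le> \<delta> * real n" by linarith
  have "(\<Sum>i<n. (x i - y i)\<^sup>2) \<le> (\<Sum>i<n. r^2)"
  proof (intro sum_mono)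
    fix i assume "i \<in> {..<n}"
    show "(x i - y i)\<^sup>2 \<le> r^2"
    proof (cases "\<bar>x i\<bar> \<ge> r")
      case True then show ?thesis using \<open>i \<in> {..<n}\<close> unfolding y_def by simp
    next
      case False
      then have "\<bar>x i\<bar> \<le> r" by simp
      then have "\<bar>x i\<bar>^2 \<le> r^2" by (intro power_mono) auto
      then show ?thesis using False unfolding y_def by simp
    qed
  qed
  also have "\<dots> = \<nu>^2" unfolding r_def using n by (simp add: power_divide)
  finally have "sqrt (\<Sum>i<n. (x i - y i)\<^sup>2) \<le> sqrt (\<nu>^2)" by (rule real_sqrt_le_mono)
  then have y3: "sqrt (\<Sum>i<n. (x i - y i)\<^sup>2) \<le> \<nu>" using nu by simp
  have "x \<in> unit_sphere n" using x unfolding Incomp_def by simp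
  then have "x \<in> Comp n \<delta> \<nu>" unfolding Comp_def using y1 y2 y3 by blast
  then show False using x unfolding Incomp_def by simp
qed


lemma main_bound:
  assumes p: "0 < p" "p \<le> 1/2" and dl: "\<delta> > 0" and nu: "\<nu> > 0" and n: "n > 0"
    and x: "x \<in> Incomp n \<delta> \<nu>" and t: "t > 0"
  shows "measure_pmf.prob (bern_sum p n x) {y. \<bar>y - c\<bar> \<le> t}
           \<le> 2 * sqrt (2/(p*\<delta>)) * t / \<nu> + sqrt (2/(p*\<delta>)) / sqrt n"
proof -
  define r where "r = \<nu>/sqrt n"
  have r0: "r > 0" unfolding r_def using n nu by simp
  define U where "U = {..<n}"
  have finU: "finite U" unfolding U_def by simp
  define Gp where "Gp = {i\<in>{..<n}. x i \<ge> r}"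
  define Gm where "Gm = {i\<in>{..<n}. x i \<le> -r}"
  have sp: "real (card Gp) + real (card Gm) > \<delta> * n"
    unfolding Gp_def Gm_def r_def by (rule spread[OF x n nu])
  obtain S where SU: "S \<subseteq> U" and cS: "real (card S) > \<delta> * n / 2"
    and sg: "(\<forall>i\<in>S. x i \<ge> r) \<or> (\<forall>i\<in>S. - x i \<ge> r)"
  proof (cases "card Gp \<ge> card Gm")
    case True
    show ?thesis by (rule that[of Gp]) (use sp True in \<open>auto simp: Gp_def U_def\<close>)
  next
    case False
    show ?thesis by (rule that[of Gm]) (use sp False in \<open>auto simp: Gm_def U_def\<close>)
  qed
  have finS: "finite S" using finU SU by (rule rev_finite_subset)
  define m where "m = card S"
  define Fb where "Fb = sqrt (1/((real m+1)*p))"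
  have Fb0: "Fb \<ge> 0" unfolding Fb_def using p by simp
  have Fbk: "bpmf (card S) p k \<le> Fb" for k
  proof -
    have "(bpmf m p k)^2 \<le> 1/((real m+1)*p)" by (rule bpmf_max[OF p])
    then show ?thesis unfolding Fb_def m_def by (rule real_le_rsqrt)
  qed
  have Nb: "Nf r t u \<le> 2*t/r + 1" for u using Nf_le[OF r0] t by simp
  have Qb: "Qf p x t S u \<le> Fb * (2*t/r + 1)" for u
  proof -
    from sg show ?thesis
    proof
      assume "\<forall>i\<in>S. x i \<ge> r"
      then have "Qf p x t S u \<le> Fb * Nf r t u"
        using p t by (intro LO_pos[OF r0 _ finS] Fbk) auto
      also have "\<dots> \<le> Fb * (2*t/r + 1)" using Nb Fb0 by (intro mult_left_mono) auto
      finally show ?thesis .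
    next
      assume "\<forall>i\<in>S. - x i \<ge> r"
      then have "Qf p (\<lambda>i. - x i) t S (-u) \<le> Fb * Nf r t (-u)"
        using p t by (intro LO_pos[OF r0 _ finS] Fbk) auto
      also have "\<dots> \<le> Fb * (2*t/r + 1)" using Nb Fb0 by (intro mult_left_mono) auto
      finally show ?thesis using Qf_neg[of p x t S u] by simp
    qed
  qed
  have "measure_pmf.prob (bern_sum p n x) {y. \<bar>y - c\<bar> \<le> t}
      = (\<Sum>C\<in>Pow U. if sum x C \<in> {y. \<bar>y - c\<bar> \<le> t} then Wt p U C else 0)"
    unfolding U_def using p by (intro bern_sum_prob) auto
  also have "\<dots> = (\<Sum>B\<in>Pow (U-S). Wt p (U-S) B * (\<Sum>A\<in>Pow S. if sum x A + sum x B \<in> {y. \<bar>y - c\<bar> \<le> t} then Wt p S A else 0))"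
    by (rule split_sum[OF finU SU])
  also have "\<dots> = (\<Sum>B\<in>Pow (U-S). Wt p (U-S) B * Qf p x t S (sum x B - c))"
  proof (intro sum.cong refl arg_cong2[where f="(*)"])
    fix B
    show "(\<Sum>A\<in>Pow S. if sum x A + sum x B \<in> {y. \<bar>y - c\<bar> \<le> t} then Wt p S A else 0) = Qf p x t S (sum x B - c)"
      unfolding Qf_def Wt_def by (intro sum.cong refl) (simp add: add_diff_eq add.commute)
  qed
  also have "\<dots> \<le> (\<Sum>B\<in>Pow (U-S). Wt p (U-S) B * (Fb * (2*t/r + 1)))"
    using p by (intro sum_mono mult_left_mono Qb Wt_nonneg) auto
  also have "\<dots> = Fb * (2*t/r + 1)"
    using Wt_sum[of "U-S" p] finU by (simp add: sum_distrib_right[symmetric])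
  also have "\<dots> \<le> (sqrt (2/(p*\<delta>)) / sqrt n) * (2*t/r + 1)"
  proof (rule mult_right_mono)
    have "\<delta>*n/2 \<le> real m + 1" using cS unfolding m_def by simp
    then have "(\<delta>*n/2)*p \<le> (real m+1)*p" by (rule mult_right_mono) (use p in simp)
    then have le: "\<delta> * n * p / 2 \<le> (real m + 1) * p" by simp
    have pos: "\<delta> * n * p / 2 > 0" using dl n p by simp
    have pos2: "(real m + 1) * p * (\<delta> * n * p / 2) > 0" using pos p by simp
    have "1/((real m+1)*p) \<le> 1/(\<delta> * n * p / 2)" by (rule divide_left_mono[OF le _ pos2]) simp
    also have "\<dots> = (2/(p*\<delta>)) / n" by (simp add: field_simps)
    finally have "Fb \<le> sqrt ((2/(p*\<delta>)) / n)" unfolding Fb_def by (rule real_sqrt_le_mono)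
    then show "Fb \<le> sqrt (2/(p*\<delta>)) / sqrt n" by (simp add: real_sqrt_divide real_sqrt_mult)
    show "0 \<le> 2*t/r + 1" using t r0 by simp
  qed
  also have "\<dots> = 2 * sqrt (2/(p*\<delta>)) * t / \<nu> + sqrt (2/(p*\<delta>)) / sqrt n"
    unfolding r_def using n nu by (simp add: field_simps)
  finally show ?thesis .
qed


theorem lemma5p1:
  fixes p \<delta> \<nu> :: real
  assumes "0 < p" "p \<le> 1/2" "0 < \<delta>" "\<delta> \<le> 1" "0 < \<nu>" "\<nu> \<le> 1"
  shows "\<exists>K > 0. \<exists>L\<^sub>1 \<ge> 1. \<forall>n::nat. \<forall>L::real. \<forall>x.
           n \<ge> 2 \<longrightarrow> L \<ge> L\<^sub>1 \<longrightarrow> x \<in> Incomp n \<delta> \<nu> \<longrightarrow>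
           threshold p n x L \<le> K / sqrt (real n)"
proof -
  define \<kappa> where "\<kappa> = sqrt (2/(p*\<delta>))"
  define L1 where "L1 = 2*\<kappa>/\<nu> + \<kappa> + 1"
  have k0: "\<kappa> \<ge> 0" unfolding \<kappa>_def using assms by simp
  have L1: "L1 \<ge> 1" unfolding L1_def using k0 assms by simp
  have main: "threshold p n x L \<le> 1 / sqrt (real n)"
    if n: "n \<ge> 2" and L: "L \<ge> L1" and x: "x \<in> Incomp n \<delta> \<nu>" for n L x
  proof -
    define M where "M = bern_sum p n x"
    define T where "T = {t. 0 < t \<and> t \<le> 1 \<and> levy_conc M t > L * t}"
    have n0: "n > 0" using n by simp
    have L0: "L > 0" using L L1 by simp
    have bdd: "bdd_above ((\<lambda>c. measure_pmf.prob M {y. \<bar>y - c\<bar> \<le> t}) ` UNIV)" for t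
      by (rule bdd_aboveI[of _ 1]) (auto intro: measure_pmf.prob_le_1)
    have up: "t \<le> 1 / sqrt n" if "t \<in> T" for t
    proof (rule ccontr)
      assume "\<not> t \<le> 1 / sqrt n"
      then have tb: "1 / sqrt n < t" by simp
      have t0: "t > 0" using that unfolding T_def by simp
      have "measure_pmf.prob M {y. \<bar>y - c\<bar> \<le> t} \<le> L * t" for c
      proof -
        have "measure_pmf.prob M {y. \<bar>y - c\<bar> \<le> t} \<le> 2 * \<kappa> * t / \<nu> + \<kappa> / sqrt n"
          unfolding M_def \<kappa>_def using assms n0 x t0 by (intro main_bound) auto
        also have "\<kappa> / sqrt n \<le> \<kappa> * t"
        proof -
          have "\<kappa> * (1 / sqrt n) \<le> \<kappa> * t" using tb k0 by (intro mult_left_mono) auto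
          then show ?thesis by simp
        qed
        also have "2 * \<kappa> * t / \<nu> + \<kappa> * t = (2*\<kappa>/\<nu> + \<kappa>) * t" by (simp add: algebra_simps)
        also have "\<dots> \<le> L * t" using L t0 unfolding L1_def by (intro mult_right_mono) auto
        finally show ?thesis by simp
      qed
      then have "levy_conc M t \<le> L * t" unfolding levy_conc_def by (intro cSUP_least) auto
      then show False using that unfolding T_def by simp
    qed
    have ne: "T \<noteq> {}"
    proof -
      define t0 where "t0 = min 1 ((1-p)^n / (2*L))"
      have q0: "(1-p)^n > 0" using assms by simp
      have t00: "t0 > 0" unfolding t0_def using q0 L0 by simp
      have "(1-p)^n \<le> measure_pmf.prob M {y. \<bar>y - 0\<bar> \<le> t0}"
      proof -
        have "measure_pmf.prob M {y. \<bar>y - 0\<bar> \<le> t0} = (\<Sum>C\<in>Pow {..<n}. if sum x C \<in> {y. \<bar>y - 0\<bar> \<le> t0} then Wt p {..<n} C else 0)"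
          unfolding M_def using assms by (intro bern_sum_prob) auto
        also have "\<dots> \<ge> (if sum x {} \<in> {y. \<bar>y - 0\<bar> \<le> t0} then Wt p {..<n} {} else 0)"
          by (rule member_le_sum) (use assms Wt_nonneg[of p] in auto)
        moreover have "(if sum x {} \<in> {y. \<bar>y - 0\<bar> \<le> t0} then Wt p {..<n} {} else 0) = (1-p)^n"
          using t00 unfolding Wt_def by simp
        ultimately show ?thesis by simp
      qed
      also have "\<dots> \<le> levy_conc M t0" unfolding levy_conc_def by (rule cSUP_upper[OF _ bdd]) simp
      finally have lv: "(1-p)^n \<le> levy_conc M t0" .
      have "L * t0 \<le> L * ((1-p)^n / (2*L))" unfolding t0_def using L0 by (intro mult_left_mono) auto
      also have "\<dots> = (1-p)^n / 2" using L0 by simp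
      also have "\<dots> < (1-p)^n" using q0 by simp
      finally have "L * t0 < levy_conc M t0" using lv by simp
      then have "t0 \<in> T" unfolding T_def t0_def using t00 unfolding t0_def by simp
      then show ?thesis by auto
    qed
    have "threshold p n x L = Sup T" unfolding threshold_def T_def M_def ..
    also have "\<dots> \<le> 1 / sqrt n" by (rule cSup_least[OF ne up])
    finally show ?thesis .
  qed
  show ?thesis
    by (rule exI[of _ 1], simp, rule exI[of _ L1]) (use L1 main in auto)
qed

end
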